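(* Let $\mathcal{M}$ be an $n$-abelian category, $\mathcal{A}$ an abelian category and $F:\mathcal{M}\to\mathcal{A}$ a covariant additive functor. (i) If $F$ is left $n$-exact and $f:X\to Y$ is a weak kernel of $g:Y\to Z$, then $F(X)\xrightarrow{F(f)}F(Y)\xrightarrow{F(g)}F(Z)$ is exact. (ii) If $F$ is right $n$-exact and $g:Y\to Z$ is a weak cokernel of $f:X\to Y$, then $F(X)\xrightarrow{F(f)}F(Y)\xrightarrow{F(g)}F(Z)$ is exact.
   Context: A weak cokernel of $f:A\to B$ is a morphism $g:B\to C$ such that $\mathcal{M}(C,W)\to\mathcal{M}(B,W)\to\mathcal{M}(A,W)$ is exact for all $W$ (in particular $gf=0$); a weak kernel is defined dually. A complex $X^0\xrightarrow{d^0}\cdots\xrightarrow{d^n}X^{n+1}$ is right $n$-exact if $0\to\mathcal{M}(X^{n+1},W)\to\cdots\to\mathcal{M}(X^0,W)$ is exact for all $W$, left $n$-exact if $0\to\mathcal{M}(W,X^0)\to\cdots\to\mathcal{M}(W,X^{n+1})$ is exact for all $W$. $F$ is left $n$-exact if it sends left $n$-exact sequences to exact sequences $0\to F(X^0)\to\cdots\to F(X^{n+1})$, and right $n$-exact if it sends right $n$-exact sequences to exact sequences $F(X^0)\to\cdots\to F(X^{n+1})\to0$. An $n$-abelian category is an idempotent complete additive category in which every morphism has an $n$-kernel and an $n$-cokernel, and in which every monomorphism (resp. epimorphism) together with any of its $n$-cokernels (resp. $n$-kernels) forms an $n$-exact sequence. *)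

theory Defs
  imports Main
begin

text \<open>A category with abelian-group enriched hom-sets, given by explicit data.
  cmp C g f is the composite g after f.\<close>

record ('o, 'm) cat_data =
  ob   :: "'o set"
  ar   :: "'m set"
  dm   :: "'m \<Rightarrow> 'o"
  cd   :: "'m \<Rightarrow> 'o"
  cmp  :: "'m \<Rightarrow> 'm \<Rightarrow> 'm"
  idm  :: "'o \<Rightarrow> 'm"
  addm :: "'m \<Rightarrow> 'm \<Rightarrow> 'm"
  zm   :: "'o \<Rightarrow> 'o \<Rightarrow> 'm"
  negm :: "'m \<Rightarrow> 'm"

definition hom :: "('o, 'm) cat_data \<Rightarrow> 'o \<Rightarrow> 'o \<Rightarrow> 'm set" where
  "hom C X Y = {f \<in> ar C. dm C f = X \<and> cd C f = Y}"

definition preadditive :: "('o, 'm) cat_data \<Rightarrow> bool" where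
  "preadditive C \<longleftrightarrow>
     (\<forall>f\<in>ar C. dm C f \<in> ob C \<and> cd C f \<in> ob C) \<and>
     (\<forall>X\<in>ob C. idm C X \<in> hom C X X) \<and>
     (\<forall>f\<in>ar C. \<forall>g\<in>ar C. dm C g = cd C f \<longrightarrow> cmp C g f \<in> hom C (dm C f) (cd C g)) \<and>
     (\<forall>f\<in>ar C. \<forall>g\<in>ar C. \<forall>h\<in>ar C. dm C g = cd C f \<longrightarrow> dm C h = cd C g \<longrightarrow>
        cmp C h (cmp C g f) = cmp C (cmp C h g) f) \<and>
     (\<forall>f\<in>ar C. cmp C (idm C (cd C f)) f = f \<and> cmp C f (idm C (dm C f)) = f) \<and>
     (\<forall>X\<in>ob C. \<forall>Y\<in>ob C.
        zm C X Y \<in> hom C X Y \<and>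
        (\<forall>f\<in>hom C X Y. \<forall>g\<in>hom C X Y. addm C f g \<in> hom C X Y) \<and>
        (\<forall>f\<in>hom C X Y. negm C f \<in> hom C X Y) \<and>
        (\<forall>f\<in>hom C X Y. \<forall>g\<in>hom C X Y. \<forall>h\<in>hom C X Y.
           addm C (addm C f g) h = addm C f (addm C g h)) \<and>
        (\<forall>f\<in>hom C X Y. \<forall>g\<in>hom C X Y. addm C f g = addm C g f) \<and>
        (\<forall>f\<in>hom C X Y. addm C (zm C X Y) f = f) \<and>
        (\<forall>f\<in>hom C X Y. addm C (negm C f) f = zm C X Y)) \<and>
     (\<forall>X\<in>ob C. \<forall>Y\<in>ob C. \<forall>Z\<in>ob C.
        (\<forall>f\<in>hom C X Y. \<forall>f'\<in>hom C X Y. \<forall>g\<in>hom C Y Z.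
           cmp C g (addm C f f') = addm C (cmp C g f) (cmp C g f')) \<and>
        (\<forall>f\<in>hom C X Y. \<forall>g\<in>hom C Y Z. \<forall>g'\<in>hom C Y Z.
           cmp C (addm C g g') f = addm C (cmp C g f) (cmp C g' f)))"

definition zero_object :: "('o, 'm) cat_data \<Rightarrow> 'o \<Rightarrow> bool" where
  "zero_object C Z \<longleftrightarrow> Z \<in> ob C \<and>
     (\<forall>X\<in>ob C. (\<exists>!f. f \<in> hom C Z X) \<and> (\<exists>!f. f \<in> hom C X Z))"

definition is_biproduct ::
  "('o, 'm) cat_data \<Rightarrow> 'o \<Rightarrow> 'o \<Rightarrow> 'o \<Rightarrow> 'm \<Rightarrow> 'm \<Rightarrow> 'm \<Rightarrow> 'm \<Rightarrow> bool" where
  "is_biproduct C X1 X2 S i1 i2 p1 p2 \<longleftrightarrow> S \<in> ob C \<and>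
     i1 \<in> hom C X1 S \<and> i2 \<in> hom C X2 S \<and> p1 \<in> hom C S X1 \<and> p2 \<in> hom C S X2 \<and>
     cmp C p1 i1 = idm C X1 \<and> cmp C p2 i2 = idm C X2 \<and>
     cmp C p2 i1 = zm C X1 X2 \<and> cmp C p1 i2 = zm C X2 X1 \<and>
     addm C (cmp C i1 p1) (cmp C i2 p2) = idm C S"

definition additive :: "('o, 'm) cat_data \<Rightarrow> bool" where
  "additive C \<longleftrightarrow> preadditive C \<and> (\<exists>Z. zero_object C Z) \<and>
     (\<forall>X1\<in>ob C. \<forall>X2\<in>ob C. \<exists>S i1 i2 p1 p2. is_biproduct C X1 X2 S i1 i2 p1 p2)"

definition idempotent_complete :: "('o, 'm) cat_data \<Rightarrow> bool" where
  "idempotent_complete C \<longleftrightarrow>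
     (\<forall>X\<in>ob C. \<forall>e\<in>hom C X X. cmp C e e = e \<longrightarrow>
        (\<exists>Y\<in>ob C. \<exists>r\<in>hom C X Y. \<exists>s\<in>hom C Y X. cmp C r s = idm C Y \<and> cmp C s r = e))"

definition mono :: "('o, 'm) cat_data \<Rightarrow> 'm \<Rightarrow> bool" where
  "mono C f \<longleftrightarrow> f \<in> ar C \<and>
     (\<forall>g\<in>ar C. \<forall>h\<in>ar C. cd C g = dm C f \<longrightarrow> cd C h = dm C f \<longrightarrow> dm C g = dm C h \<longrightarrow>
        cmp C f g = cmp C f h \<longrightarrow> g = h)"

definition epi :: "('o, 'm) cat_data \<Rightarrow> 'm \<Rightarrow> bool" where
  "epi C f \<longleftrightarrow> f \<in> ar C \<and>
     (\<forall>g\<in>ar C. \<forall>h\<in>ar C. dm C g = cd C f \<longrightarrow> dm C h = cd C f \<longrightarrow> cd C g = cd C h \<longrightarrow>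
        cmp C g f = cmp C h f \<longrightarrow> g = h)"

definition is_kernel :: "('o, 'm) cat_data \<Rightarrow> 'm \<Rightarrow> 'm \<Rightarrow> bool" where
  "is_kernel C g k \<longleftrightarrow> g \<in> ar C \<and> k \<in> ar C \<and> cd C k = dm C g \<and>
     cmp C g k = zm C (dm C k) (cd C g) \<and>
     (\<forall>h\<in>ar C. cd C h = dm C g \<longrightarrow> cmp C g h = zm C (dm C h) (cd C g) \<longrightarrow>
        (\<exists>!u. u \<in> hom C (dm C h) (dm C k) \<and> cmp C k u = h))"

definition is_cokernel :: "('o, 'm) cat_data \<Rightarrow> 'm \<Rightarrow> 'm \<Rightarrow> bool" where
  "is_cokernel C f c \<longleftrightarrow> f \<in> ar C \<and> c \<in> ar C \<and> dm C c = cd C f \<and>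
     cmp C c f = zm C (dm C f) (cd C c) \<and>
     (\<forall>h\<in>ar C. dm C h = cd C f \<longrightarrow> cmp C h f = zm C (dm C f) (cd C h) \<longrightarrow>
        (\<exists>!u. u \<in> hom C (cd C c) (cd C h) \<and> cmp C u c = h))"

definition abelian :: "('o, 'm) cat_data \<Rightarrow> bool" where
  "abelian C \<longleftrightarrow> additive C \<and>
     (\<forall>f\<in>ar C. (\<exists>k. is_kernel C f k) \<and> (\<exists>c. is_cokernel C f c)) \<and>
     (\<forall>m. mono C m \<longrightarrow> (\<exists>c. is_cokernel C m c \<and> is_kernel C c m)) \<and>
     (\<forall>e. epi C e \<longrightarrow> (\<exists>k. is_kernel C e k \<and> is_cokernel C k e))"

text \<open>Exactness of A --f--> B --g--> C in an abelian category: g f = 0 and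
  the image of f is a kernel of g (f = m e with e epi and m a kernel of g).\<close>
definition exact_at :: "('o, 'm) cat_data \<Rightarrow> 'm \<Rightarrow> 'm \<Rightarrow> bool" where
  "exact_at C f g \<longleftrightarrow> f \<in> ar C \<and> g \<in> ar C \<and> cd C f = dm C g \<and>
     cmp C g f = zm C (dm C f) (cd C g) \<and>
     (\<exists>m e. epi C e \<and> is_kernel C g m \<and> dm C m = cd C e \<and> f = cmp C m e)"

definition is_seq :: "('o, 'm) cat_data \<Rightarrow> nat \<Rightarrow> (nat \<Rightarrow> 'o) \<Rightarrow> (nat \<Rightarrow> 'm) \<Rightarrow> bool" where
  "is_seq C n X d \<longleftrightarrow> (\<forall>i\<le>n. d i \<in> hom C (X i) (X (Suc i)))"

text \<open>Left n-exact: 0 -> M(W,X 0) -> ... -> M(W,X (n+1)) exact for all W.\<close>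
definition left_n_exact_seq :: "('o, 'm) cat_data \<Rightarrow> nat \<Rightarrow> (nat \<Rightarrow> 'o) \<Rightarrow> (nat \<Rightarrow> 'm) \<Rightarrow> bool" where
  "left_n_exact_seq C n X d \<longleftrightarrow> is_seq C n X d \<and>
     (\<forall>W\<in>ob C.
        (\<forall>h\<in>hom C W (X 0). cmp C (d 0) h = zm C W (X 1) \<longrightarrow> h = zm C W (X 0)) \<and>
        (\<forall>j<n. \<forall>h\<in>hom C W (X (Suc j)).
           cmp C (d (Suc j)) h = zm C W (X (Suc (Suc j))) \<longleftrightarrow>
           (\<exists>u\<in>hom C W (X j). h = cmp C (d j) u)))"

text \<open>Right n-exact: 0 -> M(X (n+1),W) -> ... -> M(X 0,W) exact for all W.\<close>
definition right_n_exact_seq :: "('o, 'm) cat_data \<Rightarrow> nat \<Rightarrow> (nat \<Rightarrow> 'o) \<Rightarrow> (nat \<Rightarrow> 'm) \<Rightarrow> bool" where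
  "right_n_exact_seq C n X d \<longleftrightarrow> is_seq C n X d \<and>
     (\<forall>W\<in>ob C.
        (\<forall>h\<in>hom C (X (Suc n)) W. cmp C h (d n) = zm C (X n) W \<longrightarrow> h = zm C (X (Suc n)) W) \<and>
        (\<forall>j<n. \<forall>h\<in>hom C (X (Suc j)) W.
           cmp C h (d j) = zm C (X j) W \<longleftrightarrow>
           (\<exists>u\<in>hom C (X (Suc (Suc j))) W. h = cmp C u (d (Suc j)))))"

definition n_exact_seq :: "('o, 'm) cat_data \<Rightarrow> nat \<Rightarrow> (nat \<Rightarrow> 'o) \<Rightarrow> (nat \<Rightarrow> 'm) \<Rightarrow> bool" where
  "n_exact_seq C n X d \<longleftrightarrow> left_n_exact_seq C n X d \<and> right_n_exact_seq C n X d"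

text \<open>(d 0, ..., d (n-1)) is an n-kernel of f = d n.\<close>
definition is_n_kernel :: "('o, 'm) cat_data \<Rightarrow> nat \<Rightarrow> 'm \<Rightarrow> (nat \<Rightarrow> 'o) \<Rightarrow> (nat \<Rightarrow> 'm) \<Rightarrow> bool" where
  "is_n_kernel C n f X d \<longleftrightarrow> d n = f \<and> left_n_exact_seq C n X d"

text \<open>(d 1, ..., d n) is an n-cokernel of f = d 0.\<close>
definition is_n_cokernel :: "('o, 'm) cat_data \<Rightarrow> nat \<Rightarrow> 'm \<Rightarrow> (nat \<Rightarrow> 'o) \<Rightarrow> (nat \<Rightarrow> 'm) \<Rightarrow> bool" where
  "is_n_cokernel C n f X d \<longleftrightarrow> d 0 = f \<and> right_n_exact_seq C n X d"

definition n_abelian :: "('o, 'm) cat_data \<Rightarrow> nat \<Rightarrow> bool" where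
  "n_abelian C n \<longleftrightarrow> additive C \<and> idempotent_complete C \<and>
     (\<forall>f\<in>ar C. (\<exists>X d. is_n_kernel C n f X d) \<and> (\<exists>X d. is_n_cokernel C n f X d)) \<and>
     (\<forall>f X d. mono C f \<longrightarrow> is_n_cokernel C n f X d \<longrightarrow> n_exact_seq C n X d) \<and>
     (\<forall>f X d. epi C f \<longrightarrow> is_n_kernel C n f X d \<longrightarrow> n_exact_seq C n X d)"

definition additive_functor ::
  "('a, 'b) cat_data \<Rightarrow> ('c, 'd) cat_data \<Rightarrow> ('a \<Rightarrow> 'c) \<Rightarrow> ('b \<Rightarrow> 'd) \<Rightarrow> bool" where
  "additive_functor C D Fo Fm \<longleftrightarrow>
     (\<forall>X\<in>ob C. Fo X \<in> ob D) \<and>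
     (\<forall>f\<in>ar C. Fm f \<in> hom D (Fo (dm C f)) (Fo (cd C f))) \<and>
     (\<forall>X\<in>ob C. Fm (idm C X) = idm D (Fo X)) \<and>
     (\<forall>f\<in>ar C. \<forall>g\<in>ar C. dm C g = cd C f \<longrightarrow> Fm (cmp C g f) = cmp D (Fm g) (Fm f)) \<and>
     (\<forall>X\<in>ob C. \<forall>Y\<in>ob C. \<forall>f\<in>hom C X Y. \<forall>g\<in>hom C X Y.
        Fm (addm C f g) = addm D (Fm f) (Fm g))"

definition left_n_exact_functor ::
  "('a, 'b) cat_data \<Rightarrow> ('c, 'd) cat_data \<Rightarrow> nat \<Rightarrow> ('a \<Rightarrow> 'c) \<Rightarrow> ('b \<Rightarrow> 'd) \<Rightarrow> bool" where
  "left_n_exact_functor C D n Fo Fm \<longleftrightarrow>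
     (\<forall>X d. left_n_exact_seq C n X d \<longrightarrow>
        mono D (Fm (d 0)) \<and> (\<forall>j<n. exact_at D (Fm (d j)) (Fm (d (Suc j)))))"

definition right_n_exact_functor ::
  "('a, 'b) cat_data \<Rightarrow> ('c, 'd) cat_data \<Rightarrow> nat \<Rightarrow> ('a \<Rightarrow> 'c) \<Rightarrow> ('b \<Rightarrow> 'd) \<Rightarrow> bool" where
  "right_n_exact_functor C D n Fo Fm \<longleftrightarrow>
     (\<forall>X d. right_n_exact_seq C n X d \<longrightarrow>
        epi D (Fm (d n)) \<and> (\<forall>j<n. exact_at D (Fm (d j)) (Fm (d (Suc j)))))"

definition weak_kernel :: "('o, 'm) cat_data \<Rightarrow> 'm \<Rightarrow> 'm \<Rightarrow> bool" where
  "weak_kernel C f g \<longleftrightarrow> f \<in> ar C \<and> g \<in> ar C \<and> cd C f = dm C g \<and>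
     cmp C g f = zm C (dm C f) (cd C g) \<and>
     (\<forall>W\<in>ob C. \<forall>h\<in>hom C W (dm C g). cmp C g h = zm C W (cd C g) \<longrightarrow>
        (\<exists>u\<in>hom C W (dm C f). cmp C f u = h))"

definition weak_cokernel :: "('o, 'm) cat_data \<Rightarrow> 'm \<Rightarrow> 'm \<Rightarrow> bool" where
  "weak_cokernel C g f \<longleftrightarrow> f \<in> ar C \<and> g \<in> ar C \<and> cd C f = dm C g \<and>
     cmp C g f = zm C (dm C f) (cd C g) \<and>
     (\<forall>W\<in>ob C. \<forall>h\<in>hom C (cd C f) W. cmp C h f = zm C (dm C f) W \<longrightarrow>
        (\<exists>u\<in>hom C (cd C g) W. cmp C u g = h))"

end

theory Submission
  imports Defs
begin

lemma hom_iff: "f \<in> hom C X Y \<longleftrightarrow> f \<in> ar C \<and> dm C f = X \<and> cd C f = Y"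
  by (simp add: hom_def)

lemma pa_ob: "preadditive C \<Longrightarrow> f \<in> ar C \<Longrightarrow> dm C f \<in> ob C \<and> cd C f \<in> ob C"
  unfolding preadditive_def by (elim conjE) blast

lemma pa_cmp: "preadditive C \<Longrightarrow> f \<in> ar C \<Longrightarrow> g \<in> ar C \<Longrightarrow> dm C g = cd C f
  \<Longrightarrow> cmp C g f \<in> hom C (dm C f) (cd C g)"
  unfolding preadditive_def by (elim conjE) blast

lemma pa_assoc: "preadditive C \<Longrightarrow> f \<in> ar C \<Longrightarrow> g \<in> ar C \<Longrightarrow> h \<in> ar C \<Longrightarrow>
   dm C g = cd C f \<Longrightarrow> dm C h = cd C g \<Longrightarrow> cmp C h (cmp C g f) = cmp C (cmp C h g) f"
  unfolding preadditive_def by (elim conjE) blast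

lemma pa_grp: "preadditive C \<Longrightarrow> X \<in> ob C \<Longrightarrow> Y \<in> ob C \<Longrightarrow>
        zm C X Y \<in> hom C X Y \<and>
        (\<forall>f\<in>hom C X Y. \<forall>g\<in>hom C X Y. addm C f g \<in> hom C X Y) \<and>
        (\<forall>f\<in>hom C X Y. negm C f \<in> hom C X Y) \<and>
        (\<forall>f\<in>hom C X Y. \<forall>g\<in>hom C X Y. \<forall>h\<in>hom C X Y.
           addm C (addm C f g) h = addm C f (addm C g h)) \<and>
        (\<forall>f\<in>hom C X Y. addm C (zm C X Y) f = f) \<and>
        (\<forall>f\<in>hom C X Y. addm C (negm C f) f = zm C X Y)"
  unfolding preadditive_def by (elim conjE) blast

lemma pa_dist_all: "preadditive C \<Longrightarrow> (\<forall>X\<in>ob C. \<forall>Y\<in>ob C. \<forall>Z\<in>ob C.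
        (\<forall>f\<in>hom C X Y. \<forall>f'\<in>hom C X Y. \<forall>g\<in>hom C Y Z.
           cmp C g (addm C f f') = addm C (cmp C g f) (cmp C g f')) \<and>
        (\<forall>f\<in>hom C X Y. \<forall>g\<in>hom C Y Z. \<forall>g'\<in>hom C Y Z.
           cmp C (addm C g g') f = addm C (cmp C g f) (cmp C g' f)))"
  unfolding preadditive_def by (elim conjE) assumption
lemma pa_distl: "preadditive C \<Longrightarrow> X \<in> ob C \<Longrightarrow> Y \<in> ob C \<Longrightarrow> Z \<in> ob C \<Longrightarrow>
  f \<in> hom C X Y \<Longrightarrow> f' \<in> hom C X Y \<Longrightarrow> g \<in> hom C Y Z \<Longrightarrow>
           cmp C g (addm C f f') = addm C (cmp C g f) (cmp C g f')"
  apply (drule pa_dist_all) 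
  apply (drule bspec[where x=X], assumption)
  apply (drule bspec[where x=Y], assumption)
  apply (drule bspec[where x=Z], assumption)
  by blast

lemma L1:
  assumes "preadditive C" "X \<in> ob C" "Y \<in> ob C" "a \<in> hom C X Y" "addm C a a = a"
  shows "a = zm C X Y"
proof -
  note G = pa_grp[OF assms(1-3)]
  have n: "negm C a \<in> hom C X Y" using G assms(4) by blast
  have "zm C X Y = addm C (negm C a) a" using G assms(4) by auto
  also have "\<dots> = addm C (negm C a) (addm C a a)" using assms(5) by simp
  also have "\<dots> = addm C (addm C (negm C a) a) a"
  proof -
    have "\<forall>h\<in>hom C X Y. addm C (addm C (negm C a) a) h = addm C (negm C a) (addm C a h)"
      using G n assms(4) by blast
    thus ?thesis using assms(4) by simp
  qed
  also have "\<dots> = a" using G assms(4) by auto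
  finally show ?thesis by simp
qed

lemma L3:
  assumes "preadditive C" "X \<in> ob C" "Y \<in> ob C" "Z \<in> ob C" "g \<in> hom C Y Z"
  shows "cmp C g (zm C X Y) = zm C X Z"
proof -
  note G = pa_grp[OF assms(1-3)]
  have z: "zm C X Y \<in> hom C X Y" using G by blast
  have zz: "addm C (zm C X Y) (zm C X Y) = zm C X Y" using G z by blast
  have c: "cmp C g (zm C X Y) \<in> hom C X Z"
    using pa_cmp[OF assms(1), of "zm C X Y" g] z assms(5) by (auto simp: hom_iff)
  have "addm C (cmp C g (zm C X Y)) (cmp C g (zm C X Y)) = cmp C g (zm C X Y)"
    using pa_distl[OF assms(1-4) z z assms(5)] zz by simp
  thus ?thesis using L1[OF assms(1,2,4) c] by simp
qed

lemma L2:
  assumes "preadditive M" "preadditive A" "additive_functor M A Fo Fm"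
    "X \<in> ob M" "Y \<in> ob M"
  shows "Fm (zm M X Y) = zm A (Fo X) (Fo Y)"
proof -
  note G = pa_grp[OF assms(1,4,5)]
  have z: "zm M X Y \<in> hom M X Y" using G by blast
  have zz: "addm M (zm M X Y) (zm M X Y) = zm M X Y" using G z by blast
  have F: "Fm (zm M X Y) \<in> hom A (Fo X) (Fo Y)"
    using assms(3) z unfolding additive_functor_def hom_iff by auto
  have "Fm (addm M (zm M X Y) (zm M X Y)) = addm A (Fm (zm M X Y)) (Fm (zm M X Y))"
    using assms(3,4,5) z unfolding additive_functor_def by blast
  hence "addm A (Fm (zm M X Y)) (Fm (zm M X Y)) = Fm (zm M X Y)" using zz by simp
  moreover have "Fo X \<in> ob A" "Fo Y \<in> ob A" using assms(3,4,5) unfolding additive_functor_def by auto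
  ultimately show ?thesis using L1[OF assms(2) _ _ F] by simp
qed

lemma F_hom: "additive_functor M A Fo Fm \<Longrightarrow> f \<in> ar M \<Longrightarrow> Fm f \<in> hom A (Fo (dm M f)) (Fo (cd M f))"
  unfolding additive_functor_def by blast

lemma F_cmp: "additive_functor M A Fo Fm \<Longrightarrow> f \<in> ar M \<Longrightarrow> g \<in> ar M \<Longrightarrow> dm M g = cd M f \<Longrightarrow>
  Fm (cmp M g f) = cmp A (Fm g) (Fm f)"
  unfolding additive_functor_def by blast

lemma F_ob: "additive_functor M A Fo Fm \<Longrightarrow> X \<in> ob M \<Longrightarrow> Fo X \<in> ob A"
  unfolding additive_functor_def by blast

lemma abel_pa: "abelian A \<Longrightarrow> preadditive A"
  unfolding abelian_def additive_def by blast


lemma pa_id: "preadditive C \<Longrightarrow> X \<in> ob C \<Longrightarrow> idm C X \<in> hom C X X"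
  unfolding preadditive_def by (elim conjE) blast

lemma pa_idr: "preadditive C \<Longrightarrow> f \<in> ar C \<Longrightarrow> cmp C f (idm C (dm C f)) = f"
  unfolding preadditive_def by (elim conjE) blast

lemma pa_idl: "preadditive C \<Longrightarrow> f \<in> ar C \<Longrightarrow> cmp C (idm C (cd C f)) f = f"
  unfolding preadditive_def by (elim conjE) blast

lemma partI:
  assumes "n \<ge> 1" and nab: "n_abelian M n" and pA: "preadditive A"
    and FF: "additive_functor M A Fo Fm"
    and LF: "left_n_exact_functor M A n Fo Fm"
    and wk: "weak_kernel M f g"
  shows "exact_at A (Fm f) (Fm g)"
proof -
  have pM: "preadditive M" using nab unfolding n_abelian_def additive_def by blast
  have gar: "g \<in> ar M" and far: "f \<in> ar M" and cdf: "cd M f = dm M g"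
    and gf0: "cmp M g f = zm M (dm M f) (cd M g)"
    and wkp: "\<forall>W\<in>ob M. \<forall>h\<in>hom M W (dm M g). cmp M g h = zm M W (cd M g) \<longrightarrow>
        (\<exists>u\<in>hom M W (dm M f). cmp M f u = h)"
    using wk unfolding weak_kernel_def by auto
  obtain X d where nk: "is_n_kernel M n g X d" using nab gar unfolding n_abelian_def by blast
  hence dn: "d n = g" and les: "left_n_exact_seq M n X d" unfolding is_n_kernel_def by auto
  obtain k where k: "n = Suc k" using assms(1) by (cases n) auto
  have seq: "\<forall>i\<le>n. d i \<in> hom M (X i) (X (Suc i))" using les
    unfolding left_n_exact_seq_def is_seq_def by blast
  have dk: "d k \<in> hom M (X k) (X n)" using seq k by auto
  have gh: "g \<in> hom M (X n) (X (Suc n))" using seq dn by auto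
  have Xk: "X k \<in> ob M" using pa_ob[OF pM, of "d k"] dk by (auto simp: hom_iff)
  have iff: "\<forall>h\<in>hom M (X k) (X (Suc k)).
           cmp M (d (Suc k)) h = zm M (X k) (X (Suc (Suc k))) \<longleftrightarrow>
           (\<exists>u\<in>hom M (X k) (X k). h = cmp M (d k) u)"
    using les Xk k unfolding left_n_exact_seq_def by blast
  have "\<exists>u\<in>hom M (X k) (X k). d k = cmp M (d k) u"
  proof
    show "idm M (X k) \<in> hom M (X k) (X k)" using pa_id[OF pM Xk] .
    show "d k = cmp M (d k) (idm M (X k))" using pa_idr[OF pM, of "d k"] dk by (auto simp: hom_iff)
  qed
  hence gdk: "cmp M g (d k) = zm M (X k) (cd M g)" using iff dk k dn gh by (auto simp: hom_iff)
  obtain u where u: "u \<in> hom M (X k) (dm M f)" "cmp M f u = d k"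
  proof -
    have "d k \<in> hom M (X k) (dm M g)" using dk gh by (auto simp: hom_iff)
    moreover have "cmp M g (d k) = zm M (X k) (cd M g)" using gdk .
    ultimately have "\<exists>u\<in>hom M (X k) (dm M f). cmp M f u = d k" using wkp Xk by blast
    thus ?thesis using that by blast
  qed
  have Fdk: "Fm (d k) = cmp A (Fm f) (Fm u)"
    using F_cmp[OF FF, of u f] u far by (auto simp: hom_iff)
  have "\<forall>j<n. exact_at A (Fm (d j)) (Fm (d (Suc j)))"
    using LF les unfolding left_n_exact_functor_def by blast
  hence ex: "exact_at A (Fm (d k)) (Fm g)" using k dn by auto
  then obtain m e where epe: "epi A e" and ker: "is_kernel A (Fm g) m" and dme: "dm A m = cd A e"
    and dkme: "Fm (d k) = cmp A m e" and z1: "cmp A (Fm g) (Fm (d k)) = zm A (dm A (Fm (d k))) (cd A (Fm g))"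
    unfolding exact_at_def by blast
  have Ff: "Fm f \<in> hom A (Fo (dm M f)) (Fo (cd M f))" using F_hom[OF FF far] .
  have Fg: "Fm g \<in> hom A (Fo (dm M g)) (Fo (cd M g))" using F_hom[OF FF gar] .
  have Fu: "Fm u \<in> hom A (Fo (X k)) (Fo (dm M f))" using F_hom[OF FF, of u] u by (auto simp: hom_iff)
  have FgFf: "cmp A (Fm g) (Fm f) = zm A (dm A (Fm f)) (cd A (Fm g))"
  proof -
    have "cmp A (Fm g) (Fm f) = Fm (cmp M g f)" using F_cmp[OF FF far gar] cdf by simp
    also have "\<dots> = zm A (Fo (dm M f)) (Fo (cd M g))"
      using gf0 L2[OF pM pA FF] pa_ob[OF pM] far gar by auto
    finally show ?thesis using Ff Fg by (auto simp: hom_iff)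
  qed
  have mar: "m \<in> ar A" and cdm: "cd A m = dm A (Fm g)"
    and kp: "\<forall>h\<in>ar A. cd A h = dm A (Fm g) \<longrightarrow> cmp A (Fm g) h = zm A (dm A h) (cd A (Fm g)) \<longrightarrow>
        (\<exists>!u. u \<in> hom A (dm A h) (dm A m) \<and> cmp A m u = h)"
    using ker unfolding is_kernel_def by blast+
  obtain w where w: "w \<in> hom A (dm A (Fm f)) (dm A m)" "cmp A m w = Fm f"
  proof -
    have "Fm f \<in> ar A" "cd A (Fm f) = dm A (Fm g)" using Ff Fg cdf by (auto simp: hom_iff)
    hence "\<exists>!u. u \<in> hom A (dm A (Fm f)) (dm A m) \<and> cmp A m u = Fm f"
      using kp FgFf by blast
    thus ?thesis using that by blast
  qed
  have ear: "e \<in> ar A" using epe unfolding epi_def by blast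
  have Fdkar: "Fm (d k) \<in> hom A (Fo (X k)) (Fo (X n))" using F_hom[OF FF, of "d k"] dk by (auto simp: hom_iff)
  have uniq: "\<exists>!v. v \<in> hom A (dm A (Fm (d k))) (dm A m) \<and> cmp A m v = Fm (d k)"
  proof -
    have "Fm (d k) \<in> ar A" "cd A (Fm (d k)) = dm A (Fm g)" using Fdkar Fg gh dn by (auto simp: hom_iff)
    thus ?thesis using kp z1 by blast
  qed
  have eh: "e \<in> hom A (dm A (Fm (d k))) (dm A m)"
    using pa_cmp[OF pA ear mar] dme dkme ear by (auto simp: hom_iff)
  have wFu: "cmp A w (Fm u) \<in> hom A (dm A (Fm (d k))) (dm A m)"
    using pa_cmp[OF pA, of "Fm u" w] w Fu Ff Fdkar by (auto simp: hom_iff)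
  have "cmp A m (cmp A w (Fm u)) = cmp A (cmp A m w) (Fm u)"
    using pa_assoc[OF pA, of "Fm u" w m] w Fu Ff mar by (auto simp: hom_iff)
  hence mwFu: "cmp A m (cmp A w (Fm u)) = Fm (d k)" using w Fdk by simp
  have e_eq: "e = cmp A w (Fm u)"
  proof -
    have P1: "e \<in> hom A (dm A (Fm (d k))) (dm A m) \<and> cmp A m e = Fm (d k)" using eh dkme by simp
    have P2: "cmp A w (Fm u) \<in> hom A (dm A (Fm (d k))) (dm A m) \<and> cmp A m (cmp A w (Fm u)) = Fm (d k)"
      using wFu mwFu by simp
    from uniq obtain v where V: "\<forall>y. y \<in> hom A (dm A (Fm (d k))) (dm A m) \<and> cmp A m y = Fm (d k) \<longrightarrow> y = v"
      by (elim ex1E) blast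
    have "e = v" using V P1 by blast
    moreover have "cmp A w (Fm u) = v" using V P2 by blast
    ultimately show ?thesis by simp
  qed
  have epw: "epi A w"
    unfolding epi_def
  proof (intro conjI ballI impI)
    show "w \<in> ar A" using w by (auto simp: hom_iff)
    fix a b assume ab: "a \<in> ar A" "b \<in> ar A" "dm A a = cd A w" "dm A b = cd A w" "cd A a = cd A b"
      "cmp A a w = cmp A b w"
    have Fuar: "Fm u \<in> ar A" "cd A (Fm u) = dm A w" using Fu w Ff by (auto simp: hom_iff)
    have war: "w \<in> ar A" using w by (simp add: hom_iff)
    have "cmp A a e = cmp A (cmp A a w) (Fm u)"
      unfolding e_eq using pa_assoc[OF pA Fuar(1) war ab(1) Fuar(2)[symmetric] ab(3)] .
    also have "\<dots> = cmp A (cmp A b w) (Fm u)" using ab(6) by simp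
    also have "\<dots> = cmp A b e"
      unfolding e_eq using pa_assoc[OF pA Fuar(1) war ab(2) Fuar(2)[symmetric] ab(4)] by simp
    finally have "cmp A a e = cmp A b e" .
    moreover have "cd A e = cd A w" using dme w by (auto simp: hom_iff)
    moreover have "\<forall>g\<in>ar A. \<forall>h\<in>ar A. dm A g = cd A e \<longrightarrow> dm A h = cd A e \<longrightarrow> cd A g = cd A h \<longrightarrow>
        cmp A g e = cmp A h e \<longrightarrow> g = h" using epe unfolding epi_def by blast
    ultimately show "a = b" using ab by metis
  qed
  have "Fm f \<in> ar A" "Fm g \<in> ar A" "cd A (Fm f) = dm A (Fm g)" "dm A m = cd A w"
    using Ff Fg cdf w by (auto simp: hom_iff)
  hence "Fm f \<in> ar A \<and> Fm g \<in> ar A \<and> cd A (Fm f) = dm A (Fm g) \<and>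
     cmp A (Fm g) (Fm f) = zm A (dm A (Fm f)) (cd A (Fm g)) \<and>
     (epi A w \<and> is_kernel A (Fm g) m \<and> dm A m = cd A w \<and> Fm f = cmp A m w)"
    using FgFf epw ker w(2) by simp
  thus ?thesis unfolding exact_at_def by blast
qed


lemma partII:
  assumes "n \<ge> 1" and nab: "n_abelian M n" and pA: "preadditive A"
    and FF: "additive_functor M A Fo Fm"
    and RF: "right_n_exact_functor M A n Fo Fm"
    and wc: "weak_cokernel M g f"
  shows "exact_at A (Fm f) (Fm g)"
proof -
  have pM: "preadditive M" using nab unfolding n_abelian_def additive_def by blast
  have gar: "g \<in> ar M" and far: "f \<in> ar M" and cdf: "cd M f = dm M g"
    and gf0: "cmp M g f = zm M (dm M f) (cd M g)"
    and wcp: "\<forall>W\<in>ob M. \<forall>h\<in>hom M (cd M f) W. cmp M h f = zm M (dm M f) W \<longrightarrow>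
        (\<exists>u\<in>hom M (cd M g) W. cmp M u g = h)"
    using wc unfolding weak_cokernel_def by blast+
  obtain X d where nk: "is_n_cokernel M n f X d" using nab far unfolding n_abelian_def by blast
  hence d0: "d 0 = f" and res: "right_n_exact_seq M n X d" unfolding is_n_cokernel_def by auto
  have seq: "\<forall>i\<le>n. d i \<in> hom M (X i) (X (Suc i))" using res
    unfolding right_n_exact_seq_def is_seq_def by blast
  have d1: "d 1 \<in> hom M (X 1) (X 2)" using seq assms(1) by (auto simp: numeral_2_eq_2)
  have fh: "f \<in> hom M (X 0) (X 1)" using seq d0 by auto
  have X2: "X 2 \<in> ob M" using pa_ob[OF pM, of "d 1"] d1 by (auto simp: hom_iff)
  have Zob: "cd M g \<in> ob M" using pa_ob[OF pM gar] by blast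
  have iff0: "\<And>W. W \<in> ob M \<Longrightarrow> \<forall>h\<in>hom M (X 1) W.
           cmp M h (d 0) = zm M (X 0) W \<longleftrightarrow>
           (\<exists>u\<in>hom M (X 2) W. h = cmp M u (d 1))"
  proof -
    fix W assume W: "W \<in> ob M"
    have "\<forall>j<n. \<forall>h\<in>hom M (X (Suc j)) W.
           cmp M h (d j) = zm M (X j) W \<longleftrightarrow>
           (\<exists>u\<in>hom M (X (Suc (Suc j))) W. h = cmp M u (d (Suc j)))"
      using res W unfolding right_n_exact_seq_def by blast
    hence "\<forall>h\<in>hom M (X (Suc 0)) W.
           cmp M h (d 0) = zm M (X 0) W \<longleftrightarrow>
           (\<exists>u\<in>hom M (X (Suc (Suc 0))) W. h = cmp M u (d (Suc 0)))"
      using assms(1) by simp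
    thus "?thesis W" by (simp add: numeral_2_eq_2)
  qed
  have "\<exists>u\<in>hom M (X 2) (X 2). d 1 = cmp M u (d 1)"
  proof
    show "idm M (X 2) \<in> hom M (X 2) (X 2)" using pa_id[OF pM X2] .
    show "d 1 = cmp M (idm M (X 2)) (d 1)" using pa_idl[OF pM, of "d 1"] d1 by (auto simp: hom_iff)
  qed
  hence d1f: "cmp M (d 1) f = zm M (X 0) (X 2)" using iff0[OF X2] d1 d0 by auto
  obtain u where u: "u \<in> hom M (cd M g) (X 2)" "cmp M u g = d 1"
  proof -
    have "d 1 \<in> hom M (cd M f) (X 2)" using d1 fh by (auto simp: hom_iff)
    moreover have "cmp M (d 1) f = zm M (dm M f) (X 2)" using d1f fh by (auto simp: hom_iff)
    ultimately have "\<exists>u\<in>hom M (cd M g) (X 2). cmp M u g = d 1" using wcp X2 by blast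
    thus ?thesis using that by blast
  qed
  obtain v where v: "v \<in> hom M (X 2) (cd M g)" "g = cmp M v (d 1)"
  proof -
    have "g \<in> hom M (X 1) (cd M g)" using gar cdf fh by (auto simp: hom_iff)
    moreover have "cmp M g (d 0) = zm M (X 0) (cd M g)" using gf0 d0 fh by (auto simp: hom_iff)
    ultimately have "\<exists>u\<in>hom M (X 2) (cd M g). g = cmp M u (d 1)" using iff0[OF Zob] by blast
    thus ?thesis using that by blast
  qed
  have "\<forall>j<n. exact_at A (Fm (d j)) (Fm (d (Suc j)))"
    using RF res unfolding right_n_exact_functor_def by blast
  hence ex: "exact_at A (Fm f) (Fm (d 1))" using assms(1) d0 by auto
  then obtain m e where epe: "epi A e" and ker: "is_kernel A (Fm (d 1)) m" and dme: "dm A m = cd A e"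
    and fme: "Fm f = cmp A m e"
    unfolding exact_at_def by blast
  have Ff: "Fm f \<in> hom A (Fo (X 0)) (Fo (X 1))" using F_hom[OF FF far] fh by (auto simp: hom_iff)
  have Fg: "Fm g \<in> hom A (Fo (X 1)) (Fo (cd M g))" using F_hom[OF FF gar] cdf fh by (auto simp: hom_iff)
  have Fd1: "Fm (d 1) \<in> hom A (Fo (X 1)) (Fo (X 2))" using F_hom[OF FF, of "d 1"] d1 by (auto simp: hom_iff)
  have Fu: "Fm u \<in> hom A (Fo (cd M g)) (Fo (X 2))" using F_hom[OF FF, of u] u by (auto simp: hom_iff)
  have Fv: "Fm v \<in> hom A (Fo (X 2)) (Fo (cd M g))" using F_hom[OF FF, of v] v by (auto simp: hom_iff)
  have Fd1e: "Fm (d 1) = cmp A (Fm u) (Fm g)"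
    using F_cmp[OF FF, of g u] u gar by (auto simp: hom_iff)
  have Fge: "Fm g = cmp A (Fm v) (Fm (d 1))"
    using F_cmp[OF FF, of "d 1" v] v d1 by (auto simp: hom_iff)
  have FgFf: "cmp A (Fm g) (Fm f) = zm A (dm A (Fm f)) (cd A (Fm g))"
  proof -
    have "cmp A (Fm g) (Fm f) = Fm (cmp M g f)" using F_cmp[OF FF far gar] cdf by simp
    also have "\<dots> = zm A (Fo (dm M f)) (Fo (cd M g))"
      using gf0 L2[OF pM pA FF, of "dm M f" "cd M g"] pa_ob[OF pM far] Zob by simp
    finally show ?thesis using Ff Fg fh by (auto simp: hom_iff)
  qed
  have mar: "m \<in> ar A" and cdm: "cd A m = dm A (Fm (d 1))"
    and m0: "cmp A (Fm (d 1)) m = zm A (dm A m) (cd A (Fm (d 1)))"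
    and kp: "\<forall>h\<in>ar A. cd A h = dm A (Fm (d 1)) \<longrightarrow> cmp A (Fm (d 1)) h = zm A (dm A h) (cd A (Fm (d 1))) \<longrightarrow>
        (\<exists>!u. u \<in> hom A (dm A h) (dm A m) \<and> cmp A m u = h)"
    using ker unfolding is_kernel_def by blast+
  have obs: "Fo (X 1) \<in> ob A" "Fo (X 2) \<in> ob A" "Fo (cd M g) \<in> ob A"
    using Fd1 Fv pa_ob[OF pA, of "Fm (d 1)"] pa_ob[OF pA, of "Fm v"] by (auto simp: hom_iff)
  have dmob: "dm A m \<in> ob A" using pa_ob[OF pA mar] by blast
  have ker2: "is_kernel A (Fm g) m"
    unfolding is_kernel_def
  proof (intro conjI ballI impI)
    show "Fm g \<in> ar A" using Fg by (simp add: hom_iff)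
    show "m \<in> ar A" by (rule mar)
    show "cd A m = dm A (Fm g)" using cdm Fd1 Fg by (simp add: hom_iff)
    have "cmp A (Fm g) m = cmp A (Fm v) (cmp A (Fm (d 1)) m)"
      unfolding Fge using pa_assoc[OF pA mar, of "Fm (d 1)" "Fm v"] Fd1 Fv cdm by (auto simp: hom_iff)
    also have "\<dots> = cmp A (Fm v) (zm A (dm A m) (Fo (X 2)))" using m0 Fd1 by (simp add: hom_iff)
    also have "\<dots> = zm A (dm A m) (Fo (cd M g))"
      using L3[OF pA dmob obs(2) obs(3) Fv] .
    finally show "cmp A (Fm g) m = zm A (dm A m) (cd A (Fm g))" using Fg by (simp add: hom_iff)
    fix h assume h: "h \<in> ar A" "cd A h = dm A (Fm g)" "cmp A (Fm g) h = zm A (dm A h) (cd A (Fm g))"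
    have dhob: "dm A h \<in> ob A" using pa_ob[OF pA h(1)] by blast
    have "cmp A (Fm (d 1)) h = cmp A (Fm u) (cmp A (Fm g) h)"
      unfolding Fd1e using pa_assoc[OF pA h(1), of "Fm g" "Fm u"] Fg Fu h(2) by (auto simp: hom_iff)
    also have "\<dots> = cmp A (Fm u) (zm A (dm A h) (Fo (cd M g)))" using h(3) Fg by (simp add: hom_iff)
    also have "\<dots> = zm A (dm A h) (Fo (X 2))"
      using L3[OF pA dhob obs(3) obs(2) Fu] .
    finally have "cmp A (Fm (d 1)) h = zm A (dm A h) (cd A (Fm (d 1)))" using Fd1 by (simp add: hom_iff)
    moreover have "cd A h = dm A (Fm (d 1))" using h(2) Fg Fd1 by (simp add: hom_iff)
    ultimately show "\<exists>!u. u \<in> hom A (dm A h) (dm A m) \<and> cmp A m u = h" using kp h(1) by blast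
  qed
  have "Fm f \<in> ar A" "Fm g \<in> ar A" "cd A (Fm f) = dm A (Fm g)"
    using Ff Fg by (auto simp: hom_iff)
  hence "Fm f \<in> ar A \<and> Fm g \<in> ar A \<and> cd A (Fm f) = dm A (Fm g) \<and>
     cmp A (Fm g) (Fm f) = zm A (dm A (Fm f)) (cd A (Fm g)) \<and>
     (epi A e \<and> is_kernel A (Fm g) m \<and> dm A m = cd A e \<and> Fm f = cmp A m e)"
    using FgFf epe ker2 dme fme by simp
  thus ?thesis unfolding exact_at_def by blast
qed

theorem mainTheorem9:
  fixes M :: "('a, 'b) cat_data" and A :: "('c, 'd) cat_data"
    and n :: nat and Fo :: "'a \<Rightarrow> 'c" and Fm :: "'b \<Rightarrow> 'd"
  assumes "n \<ge> 1"
    and "n_abelian M n"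
    and "abelian A"
    and "additive_functor M A Fo Fm"
  shows "(left_n_exact_functor M A n Fo Fm \<longrightarrow>
            (\<forall>f g. weak_kernel M f g \<longrightarrow> exact_at A (Fm f) (Fm g))) \<and>
         (right_n_exact_functor M A n Fo Fm \<longrightarrow>
            (\<forall>f g. weak_cokernel M g f \<longrightarrow> exact_at A (Fm f) (Fm g)))"
  using partI[OF assms(1,2) abel_pa[OF assms(3)] assms(4)]
    partII[OF assms(1,2) abel_pa[OF assms(3)] assms(4)] by blast

end
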